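(* Fix an integer $N\ge 4$, and let $x_1\le x_2\le\dots\le x_k$ be points of $[0,1]$ with $k<\lfloor N/2\rfloor$. Then there exist two distinct CDFs $F_{\vec B}$ and $F_{\vec C}$, both with scale factor $N$, such that $F_{\vec B}(x_n)=F_{\vec C}(x_n)$ for all $n\in\{1,\dots,k\}$.
   Context: A binary digit vector of length (scale factor) $N\ge3$ is $\vec B=(b_0,\dots,b_{N-1})\in\{0,1\}^N$ with $2\le\|\vec B\|:=\sum_i b_i\le N-1$; its digit set is $D=\{i:b_i=1\}$. With $\phi_d(x)=(x+d)/N$ for $d\in D$, let $\mu_{\vec B}$ be the unique Borel probability measure with $\mu_{\vec B}=\frac{1}{\|\vec B\|}\sum_{d\in D}\mu_{\vec B}\circ\phi_d^{-1}$, supported on the attractor $C_{\vec B}\subset[0,1]$. The CDF with scale factor $N$ associated to $\vec B$ is $F_{\vec B}(x)=\mu_{\vec B}([0,x])$, $x\in[0,1]$. *)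

theory Defs
  imports "HOL-Probability.Probability"
begin

definition digit_vector :: "nat \<Rightarrow> nat list \<Rightarrow> bool" where
  "digit_vector N B \<longleftrightarrow> length B = N \<and> set B \<subseteq> {0, 1} \<and>
     2 \<le> sum_list B \<and> sum_list B \<le> N - 1"

definition digit_set :: "nat list \<Rightarrow> nat set" where
  "digit_set B = {i. i < length B \<and> B ! i = 1}"

definition phi :: "nat \<Rightarrow> nat \<Rightarrow> real \<Rightarrow> real" where
  "phi N d x = (x + real d) / real N"

definition ifs_measure :: "nat \<Rightarrow> nat list \<Rightarrow> real measure" where
  "ifs_measure N B = (THE \<mu>. sets \<mu> = sets borel \<and> prob_space \<mu> \<and>
     (\<forall>A \<in> sets borel. measure \<mu> A =
        (1 / real (sum_list B)) * (\<Sum>d\<in>digit_set B. measure \<mu> (phi N d -` A))))"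

definition cdf_B :: "nat \<Rightarrow> nat list \<Rightarrow> real \<Rightarrow> real" where
  "cdf_B N B x = measure (ifs_measure N B) {0..x}"

end

theory Submission
  imports Defs "HOL-Probability.Stream_Space" "HOL-Probability.Levy"
begin

definition goodm :: "nat \<Rightarrow> nat set \<Rightarrow> real measure \<Rightarrow> bool" where
  "goodm N D \<mu> \<longleftrightarrow> sets \<mu> = sets borel \<and> prob_space \<mu> \<and>
     (\<forall>A \<in> sets borel. measure \<mu> A =
        (1 / real (card D)) * (\<Sum>d\<in>D. measure \<mu> (phi N d -` A)))"

definition Xs :: "nat \<Rightarrow> nat stream \<Rightarrow> real" where
  "Xs N \<omega> = (\<Sum>i. real (min (\<omega> !! i) (N - 1)) / real N ^ Suc i)"

lemma Xs_term_bound: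
  assumes "N \<ge> 2"
  shows "norm (real (min (\<omega> !! i) (N - 1)) / real N ^ Suc i) \<le> (real N - 1) / real N * (1 / real N) ^ i"
proof -
  have "real (min (\<omega> !! i) (N - 1)) \<le> real N - 1" using assms by auto
  then have "real (min (\<omega> !! i) (N - 1)) / real N ^ Suc i \<le> (real N - 1) / real N ^ Suc i"
    using assms by (intro divide_right_mono) auto
  also have "\<dots> = (real N - 1) / real N * (1 / real N) ^ i"
    by (simp add: power_divide field_simps)
  finally show ?thesis by simp
qed

lemma geo_sum:
  assumes "N \<ge> 2"
  shows "(\<lambda>i. (real N - 1) / real N * (1 / real N) ^ i) sums 1"
proof -
  have "(\<lambda>i. (1 / real N) ^ i) sums (1 / (1 - 1 / real N))"
    using assms by (intro geometric_sums) auto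
  then have "(\<lambda>i. (real N - 1) / real N * (1 / real N) ^ i) sums ((real N - 1) / real N * (1 / (1 - 1 / real N)))"
    by (rule sums_mult)
  moreover have "(real N - 1) / real N * (1 / (1 - 1 / real N)) = 1"
    using assms by (simp add: field_simps)
  ultimately show ?thesis using assms by simp
qed

lemma Xs_summable:
  assumes "N \<ge> 2"
  shows "summable (\<lambda>i. real (min (\<omega> !! i) (N - 1)) / real N ^ Suc i)"
  by (rule summable_comparison_test'[OF sums_summable[OF geo_sum[OF assms]]])
     (use Xs_term_bound[OF assms] in auto)

lemma Xs_bounds:
  assumes "N \<ge> 2"
  shows "0 \<le> Xs N \<omega>" "Xs N \<omega> \<le> 1"
proof -
  show "0 \<le> Xs N \<omega>" unfolding Xs_def
    by (intro suminf_nonneg Xs_summable assms) auto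
  have "Xs N \<omega> \<le> (\<Sum>i. (real N - 1) / real N * (1 / real N) ^ i)" unfolding Xs_def
    using Xs_term_bound[OF assms]
    by (intro suminf_le Xs_summable assms sums_summable[OF geo_sum[OF assms]]) auto
  then show "Xs N \<omega> \<le> 1" using sums_unique[OF geo_sum[OF assms]] by simp
qed

lemma Xs_Cons:
  assumes "N \<ge> 2"
  shows "Xs N (x ## \<omega>) = phi N (min x (N - 1)) (Xs N \<omega>)"
proof -
  let ?f = "\<lambda>i. real (min ((x ## \<omega>) !! i) (N - 1)) / real N ^ Suc i"
  let ?g = "\<lambda>i. real (min (\<omega> !! i) (N - 1)) / real N ^ Suc i"
  have s: "summable ?f" by (rule Xs_summable[OF assms])
  have "(\<Sum>n. ?f (Suc n)) = suminf ?f - ?f 0" by (rule suminf_split_head[OF s])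
  moreover have "(\<lambda>n. ?f (Suc n)) = (\<lambda>n. ?g n / real N)" by (auto simp: field_simps)
  moreover have "(\<Sum>n. ?g n / real N) = suminf ?g / real N"
    by (rule suminf_divide[OF Xs_summable[OF assms]])
  ultimately have "suminf ?f = ?f 0 + suminf ?g / real N" by simp
  then show ?thesis unfolding Xs_def phi_def using assms by (simp add: field_simps)
qed

lemma Xs_measurable:
  "Xs N \<in> borel_measurable (stream_space (measure_pmf p))"
  unfolding Xs_def by measurable


definition mu0 :: "nat \<Rightarrow> nat set \<Rightarrow> real measure" where
  "mu0 N D = distr (stream_space (measure_pmf (pmf_of_set D))) borel (Xs N)"

lemma phi_measurable[measurable]: "phi N d \<in> borel_measurable borel"
  unfolding phi_def by measurable

lemma mu0_good:
  assumes N: "N \<ge> 2" and fin: "finite D" and ne: "D \<noteq> {}" and sub: "D \<subseteq> {..<N}"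
  shows "goodm N D (mu0 N D)" and "measure (mu0 N D) {0..1} = 1"
proof -
  let ?M = "measure_pmf (pmf_of_set D)"
  let ?S = "stream_space ?M"
  interpret M: prob_space ?M by (rule prob_space_measure_pmf)
  interpret S: prob_space ?S by (rule prob_space.prob_space_stream_space[OF prob_space_measure_pmf])
  have spS: "space ?S = UNIV" by (simp add: space_stream_space streams_UNIV)
  have Xm: "Xs N \<in> borel_measurable ?S" by (rule Xs_measurable)
  interpret mu: prob_space "mu0 N D" unfolding mu0_def by (rule S.prob_space_distr[OF Xm])
  have sets_mu: "sets (mu0 N D) = sets borel" unfolding mu0_def by simp
  have em: "emeasure (mu0 N D) A = (\<Sum>d\<in>D. emeasure (mu0 N D) (phi N d -` A)) / card D"
    if A: "A \<in> sets borel" for A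
  proof -
    have "emeasure (mu0 N D) A = emeasure ?S (Xs N -` A \<inter> space ?S)"
      unfolding mu0_def using A Xm by (simp add: emeasure_distr)
    also have "\<dots> = (\<integral>\<^sup>+t. emeasure ?S {x\<in>space ?S. t ## x \<in> Xs N -` A \<inter> space ?S} \<partial>?M)"
      using A Xm by (intro prob_space.emeasure_stream_space[OF prob_space_measure_pmf]) (simp add: measurable_sets)
    also have "\<dots> = (\<integral>\<^sup>+t. emeasure (mu0 N D) (phi N (min t (N - 1)) -` A) \<partial>?M)"
    proof (rule nn_integral_cong)
      fix t
      have "{x\<in>space ?S. t ## x \<in> Xs N -` A \<inter> space ?S} = Xs N -` (phi N (min t (N - 1)) -` A) \<inter> space ?S"
        using spS by (auto simp: Xs_Cons[OF N])
      moreover have "phi N (min t (N - 1)) -` A \<in> sets borel"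
        by (rule measurable_sets_borel[OF phi_measurable A])
      ultimately show "emeasure ?S {x\<in>space ?S. t ## x \<in> Xs N -` A \<inter> space ?S} = emeasure (mu0 N D) (phi N (min t (N - 1)) -` A)"
        unfolding mu0_def using Xm by (simp add: emeasure_distr)
    qed
    also have "\<dots> = (\<Sum>t\<in>D. emeasure (mu0 N D) (phi N (min t (N - 1)) -` A)) / card D"
      by (rule nn_integral_pmf_of_set[OF ne fin])
    also have "(\<Sum>t\<in>D. emeasure (mu0 N D) (phi N (min t (N - 1)) -` A)) = (\<Sum>t\<in>D. emeasure (mu0 N D) (phi N t -` A))"
    proof (rule sum.cong)
      fix t assume "t \<in> D"
      then have "min t (N - 1) = t" using sub by auto
      then show "emeasure (mu0 N D) (phi N (min t (N - 1)) -` A) = emeasure (mu0 N D) (phi N t -` A)" by simp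
    qed simp
    finally show ?thesis .
  qed
  have "\<forall>A \<in> sets borel. measure (mu0 N D) A =
        (1 / real (card D)) * (\<Sum>d\<in>D. measure (mu0 N D) (phi N d -` A))"
  proof
    fix A :: "real set" assume A: "A \<in> sets borel"
    have cD: "card D > 0" using fin ne by (simp add: card_gt_0_iff)
    have "ennreal (measure (mu0 N D) A) = (\<Sum>d\<in>D. ennreal (measure (mu0 N D) (phi N d -` A))) / ennreal (real (card D))"
      using em[OF A] by (simp add: mu.emeasure_eq_measure ennreal_of_nat_eq_real_of_nat)
    also have "\<dots> = ennreal ((\<Sum>d\<in>D. measure (mu0 N D) (phi N d -` A)) / real (card D))"
      using cD by (simp add: sum_ennreal divide_ennreal sum_nonneg)
    finally have "measure (mu0 N D) A = (\<Sum>d\<in>D. measure (mu0 N D) (phi N d -` A)) / real (card D)"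
      using cD by (subst (asm) ennreal_inj) (auto intro!: sum_nonneg divide_nonneg_nonneg)
    then show "measure (mu0 N D) A = (1 / real (card D)) * (\<Sum>d\<in>D. measure (mu0 N D) (phi N d -` A))"
      by simp
  qed
  then show "goodm N D (mu0 N D)" unfolding goodm_def using sets_mu mu.prob_space_axioms by simp
  have "emeasure (mu0 N D) {0..1} = emeasure ?S (Xs N -` {0..1} \<inter> space ?S)"
    unfolding mu0_def using Xm by (simp add: emeasure_distr)
  also have "Xs N -` {0..1} \<inter> space ?S = space ?S" using Xs_bounds[OF N] by auto
  finally show "measure (mu0 N D) {0..1} = 1"
    using S.emeasure_space_1 by (simp add: mu.emeasure_eq_measure)
qed


lemma K_meas:
  assumes "prob_space \<mu>" "sets \<mu> = sets borel"
  shows "(\<lambda>d. distr \<mu> borel (phi N d)) \<in> measurable (measure_pmf p) (subprob_algebra borel)"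
proof -
  have "(\<lambda>d. distr \<mu> borel (phi N d)) \<in> measurable (count_space UNIV) (subprob_algebra borel)"
  proof (subst measurable_count_space_eq1, safe)
    fix d
    have "prob_space (distr \<mu> borel (phi N d))"
      using assms(1) by (rule prob_space.prob_space_distr) (simp add: measurable_cong_sets[OF assms(2) refl])
    then show "distr \<mu> borel (phi N d) \<in> space (subprob_algebra borel)"
      by (simp add: space_subprob_algebra prob_space_imp_subprob_space)
  qed
  then show ?thesis unfolding measurable_cong_sets[OF sets_measure_pmf_count_space refl] .
qed

lemma good_bind:
  assumes g: "goodm N D \<mu>" and fin: "finite D" and ne: "D \<noteq> {}"
  shows "\<mu> = measure_pmf (pmf_of_set D) \<bind> (\<lambda>d. distr \<mu> borel (phi N d))"
proof -
  have sets: "sets \<mu> = sets borel" and ps: "prob_space \<mu>" and eq: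
    "\<And>A. A \<in> sets borel \<Longrightarrow> measure \<mu> A = (1 / real (card D)) * (\<Sum>d\<in>D. measure \<mu> (phi N d -` A))"
    using g unfolding goodm_def by auto
  interpret mu: prob_space \<mu> by (rule ps)
  have pm: "phi N d \<in> measurable \<mu> borel" for d unfolding measurable_cong_sets[OF sets refl] by (rule phi_measurable)
  have K: "(\<lambda>d. distr \<mu> borel (phi N d)) \<in> measurable (measure_pmf (pmf_of_set D)) (subprob_algebra borel)"
    by (rule K_meas[OF ps sets])
  have cD: "card D > 0" using fin ne by (simp add: card_gt_0_iff)
  show ?thesis
  proof (rule measure_eqI)
    show "sets \<mu> = sets (measure_pmf (pmf_of_set D) \<bind> (\<lambda>d. distr \<mu> borel (phi N d)))"
      using sets by (subst sets_bind_measurable[OF K]) auto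
  next
    fix A assume "A \<in> sets \<mu>"
    then have A: "A \<in> sets borel" using sets by simp
    have "emeasure (measure_pmf (pmf_of_set D) \<bind> (\<lambda>d. distr \<mu> borel (phi N d))) A
        = (\<integral>\<^sup>+d. emeasure (distr \<mu> borel (phi N d)) A \<partial>measure_pmf (pmf_of_set D))"
      by (rule emeasure_bind[OF _ K A]) simp
    also have "\<dots> = (\<Sum>d\<in>D. emeasure (distr \<mu> borel (phi N d)) A) / card D"
      by (rule nn_integral_pmf_of_set[OF ne fin])
    also have "\<dots> = (\<Sum>d\<in>D. ennreal (measure \<mu> (phi N d -` A))) / ennreal (real (card D))"
      using A pm sets_eq_imp_space_eq[OF sets] by (simp add: emeasure_distr mu.emeasure_eq_measure sets[symmetric] ennreal_of_nat_eq_real_of_nat)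
    also have "\<dots> = ennreal ((\<Sum>d\<in>D. measure \<mu> (phi N d -` A)) / real (card D))"
      using cD by (simp add: sum_ennreal divide_ennreal sum_nonneg)
    also have "\<dots> = ennreal (measure \<mu> A)" using eq[OF A] by simp
    also have "\<dots> = emeasure \<mu> A" by (simp add: mu.emeasure_eq_measure)
    finally show "emeasure \<mu> A = emeasure (measure_pmf (pmf_of_set D) \<bind> (\<lambda>d. distr \<mu> borel (phi N d))) A" by simp
  qed
qed

lemma good_integral:
  fixes f :: "real \<Rightarrow> real"
  assumes g: "goodm N D \<mu>" and fin: "finite D" and ne: "D \<noteq> {}"
    and fm: "f \<in> borel_measurable borel" and fb: "\<And>x. \<bar>f x\<bar> \<le> B"
  shows "integral\<^sup>L \<mu> f = (\<Sum>d\<in>D. integral\<^sup>L \<mu> (\<lambda>x. f (phi N d x))) / card D"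
proof -
  have sets: "sets \<mu> = sets borel" and ps: "prob_space \<mu>"
    using g unfolding goodm_def by auto
  interpret mu: prob_space \<mu> by (rule ps)
  have pm: "phi N d \<in> measurable \<mu> borel" for d unfolding measurable_cong_sets[OF sets refl] by (rule phi_measurable)
  have K: "(\<lambda>d. distr \<mu> borel (phi N d)) \<in> measurable (measure_pmf (pmf_of_set D)) (subprob_algebra borel)"
    by (rule K_meas[OF ps sets])
  have "integral\<^sup>L \<mu> f = integral\<^sup>L (measure_pmf (pmf_of_set D) \<bind> (\<lambda>d. distr \<mu> borel (phi N d))) f"
    using good_bind[OF g fin ne] by simp
  also have "\<dots> = \<integral>d. integral\<^sup>L (distr \<mu> borel (phi N d)) f \<partial>measure_pmf (pmf_of_set D)"
  proof (rule integral_bind[OF fm _ K, where B' = 1])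
    show "\<And>x. x \<in> space borel \<Longrightarrow> \<bar>f x\<bar> \<le> B" using fb by simp
    show "finite_measure (measure_pmf (pmf_of_set D))" by (rule prob_space.finite_measure[OF prob_space_measure_pmf])
    have "emeasure (distr \<mu> borel (phi N d)) (space (distr \<mu> borel (phi N d))) \<le> 1" for d
    proof -
      have "prob_space (distr \<mu> borel (phi N d))" using pm by (rule mu.prob_space_distr)
      from prob_space.emeasure_space_1[OF this] show ?thesis by simp
    qed
    then show "AE x in measure_pmf (pmf_of_set D). emeasure (distr \<mu> borel (phi N x)) (space (distr \<mu> borel (phi N x))) \<le> ennreal 1"
      by simp
  qed
  also have "\<dots> = (\<Sum>d\<in>D. integral\<^sup>L (distr \<mu> borel (phi N d)) f) / card D"
    by (rule integral_pmf_of_set[OF ne fin])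
  also have "\<dots> = (\<Sum>d\<in>D. integral\<^sup>L \<mu> (\<lambda>x. f (phi N d x))) / card D"
    using pm fm by (simp add: integral_distr)
  finally show ?thesis .
qed


lemma good_integral_c:
  fixes f :: "real \<Rightarrow> complex"
  assumes g: "goodm N D \<mu>" and fin: "finite D" and ne: "D \<noteq> {}"
    and fm: "f \<in> borel_measurable borel" and fb: "\<And>x. norm (f x) \<le> B"
  shows "integral\<^sup>L \<mu> f = (\<Sum>d\<in>D. integral\<^sup>L \<mu> (\<lambda>x. f (phi N d x))) / of_nat (card D)"
proof -
  have sets: "sets \<mu> = sets borel" and ps: "prob_space \<mu>"
    using g unfolding goodm_def by auto
  interpret mu: prob_space \<mu> by (rule ps)
  have int: "integrable \<mu> h" if "h \<in> borel_measurable borel" "\<And>x. norm (h x) \<le> B" for h :: "real \<Rightarrow> complex"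
    using that by (intro mu.integrable_const_bound[where B=B]) (auto simp: measurable_cong_sets[OF sets refl])
  have fdm: "(\<lambda>x. f (phi N d x)) \<in> borel_measurable borel" for d
    using fm by measurable
  have iR: "integral\<^sup>L \<mu> (\<lambda>x. Re (h x)) = Re (integral\<^sup>L \<mu> h)"
    if "h \<in> borel_measurable borel" "\<And>x. norm (h x) \<le> B" for h :: "real \<Rightarrow> complex"
    by (rule integral_bounded_linear[OF bounded_linear_Re int[OF that]])
  have iI: "integral\<^sup>L \<mu> (\<lambda>x. Im (h x)) = Im (integral\<^sup>L \<mu> h)"
    if "h \<in> borel_measurable borel" "\<And>x. norm (h x) \<le> B" for h :: "real \<Rightarrow> complex"
    by (rule integral_bounded_linear[OF bounded_linear_Im int[OF that]])
  have "Re (integral\<^sup>L \<mu> f) = integral\<^sup>L \<mu> (\<lambda>x. Re (f x))" using iR[OF fm fb] by simp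
  also have "\<dots> = (\<Sum>d\<in>D. integral\<^sup>L \<mu> (\<lambda>x. Re (f (phi N d x)))) / card D"
    using fm by (intro good_integral[OF g fin ne, where B=B] order_trans[OF abs_Re_le_cmod fb]) measurable
  also have "\<dots> = Re ((\<Sum>d\<in>D. integral\<^sup>L \<mu> (\<lambda>x. f (phi N d x))) / of_nat (card D))"
    using iR[OF fdm fb] by (simp add: Re_sum)
  finally have 1: "Re (integral\<^sup>L \<mu> f) = Re ((\<Sum>d\<in>D. integral\<^sup>L \<mu> (\<lambda>x. f (phi N d x))) / of_nat (card D))" .
  have "Im (integral\<^sup>L \<mu> f) = integral\<^sup>L \<mu> (\<lambda>x. Im (f x))" using iI[OF fm fb] by simp
  also have "\<dots> = (\<Sum>d\<in>D. integral\<^sup>L \<mu> (\<lambda>x. Im (f (phi N d x)))) / card D"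
    using fm by (intro good_integral[OF g fin ne, where B=B] order_trans[OF abs_Im_le_cmod fb]) measurable
  also have "\<dots> = Im ((\<Sum>d\<in>D. integral\<^sup>L \<mu> (\<lambda>x. f (phi N d x))) / of_nat (card D))"
    using iI[OF fdm fb] by (simp add: Im_sum)
  finally have 2: "Im (integral\<^sup>L \<mu> f) = Im ((\<Sum>d\<in>D. integral\<^sup>L \<mu> (\<lambda>x. f (phi N d x))) / of_nat (card D))" .
  show ?thesis using 1 2 by (simp add: complex_eq_iff)
qed

lemma good_char:
  assumes g: "goodm N D \<mu>" and fin: "finite D" and ne: "D \<noteq> {}" and N: "N > 0"
  shows "char \<mu> t = (\<Sum>d\<in>D. iexp (t * real d / real N)) / of_nat (card D) * char \<mu> (t / real N)"
proof -
  have "char \<mu> t = (\<Sum>d\<in>D. integral\<^sup>L \<mu> (\<lambda>x. iexp (t * phi N d x))) / of_nat (card D)"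
    unfolding char_def
  proof (rule good_integral_c[OF g fin ne, where B=1])
    show "(\<lambda>x. iexp (t * x)) \<in> borel_measurable borel"
      by (intro borel_measurable_continuous_onI continuous_intros)
    show "norm (iexp (t * x)) \<le> 1" for x
      by (simp add: norm_exp_i_times)
  qed
  also have "(\<lambda>d. integral\<^sup>L \<mu> (\<lambda>x. iexp (t * phi N d x))) = (\<lambda>d. iexp (t * real d / real N) * char \<mu> (t / real N))"
  proof (rule ext)
    fix d
    have "(\<lambda>x. iexp (t * phi N d x)) = (\<lambda>x. iexp (t * real d / real N) * iexp (t / real N * x))"
      using N by (auto simp: phi_def exp_add[symmetric] field_simps)
    then show "integral\<^sup>L \<mu> (\<lambda>x. iexp (t * phi N d x)) = iexp (t * real d / real N) * char \<mu> (t / real N)"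
      unfolding char_def by simp
  qed
  finally show ?thesis by (simp add: sum_distrib_right)
qed

lemma good_unique:
  assumes g1: "goodm N D \<mu>1" and g2: "goodm N D \<mu>2" and fin: "finite D" and ne: "D \<noteq> {}" and N: "N \<ge> 2"
  shows "\<mu>1 = \<mu>2"
proof -
  have r1: "real_distribution \<mu>1" and r2: "real_distribution \<mu>2"
    using g1 g2 unfolding goodm_def real_distribution_def real_distribution_axioms_def by auto
  define G where "G t = (\<Sum>d\<in>D. iexp (t * real d / real N)) / of_nat (card D)" for t
  define \<delta> where "\<delta> t = char \<mu>1 t - char \<mu>2 t" for t
  have cD: "card D > 0" using fin ne by (simp add: card_gt_0_iff)
  have Gb: "norm (G t) \<le> 1" for t
  proof -
    have "norm (\<Sum>d\<in>D. iexp (t * real d / real N)) \<le> (\<Sum>d\<in>D. norm (iexp (t * real d / real N)))"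
      by (rule norm_sum)
    also have "\<dots> = card D" by (simp add: norm_exp_i_times)
    finally show ?thesis using cD unfolding G_def by (simp add: norm_divide)
  qed
  have rec: "\<delta> t = G t * \<delta> (t / real N)" for t
  proof -
    have N0: "N > 0" using N by simp
    have e1: "char \<mu>1 t = G t * char \<mu>1 (t / real N)"
      unfolding G_def by (rule good_char[OF g1 fin ne N0])
    have e2: "char \<mu>2 t = G t * char \<mu>2 (t / real N)"
      unfolding G_def by (rule good_char[OF g2 fin ne N0])
    show ?thesis unfolding \<delta>_def e1 e2 by (simp add: right_diff_distrib)
  qed
  have step: "norm (\<delta> t) \<le> norm (\<delta> (t / real N))" for t
  proof -
    have "norm (\<delta> t) = norm (G t) * norm (\<delta> (t / real N))" by (simp add: rec[of t] norm_mult)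
    also have "\<dots> \<le> 1 * norm (\<delta> (t / real N))" by (intro mult_right_mono Gb) auto
    finally show ?thesis by simp
  qed
  have all: "norm (\<delta> t) \<le> norm (\<delta> (t / real N ^ n))" for t n
  proof (induction n)
    case 0 then show ?case by simp
  next
    case (Suc n)
    have "norm (\<delta> (t / real N ^ n)) \<le> norm (\<delta> (t / real N ^ n / real N))" by (rule step)
    also have "t / real N ^ n / real N = t / real N ^ Suc n" by (simp add: field_simps)
    finally show ?case using Suc by simp
  qed
  have "char \<mu>1 = char \<mu>2"
  proof
    fix t
    have lim0: "(\<lambda>n. t / real N ^ n) \<longlonglongrightarrow> 0" using N by (intro LIMSEQ_divide_realpow_zero) auto
    have cont: "isCont \<delta> 0" unfolding \<delta>_def
      using real_distribution.isCont_char[OF r1] real_distribution.isCont_char[OF r2] by (intro continuous_intros) auto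
    have "(\<lambda>n. \<delta> (t / real N ^ n)) \<longlonglongrightarrow> \<delta> 0" by (rule isCont_tendsto_compose[OF cont lim0])
    then have "(\<lambda>n. norm (\<delta> (t / real N ^ n))) \<longlonglongrightarrow> norm (\<delta> 0)" by (rule tendsto_norm)
    moreover have "\<delta> 0 = 0" unfolding \<delta>_def
      using real_distribution.char_zero[OF r1] real_distribution.char_zero[OF r2] by simp
    ultimately have "norm (\<delta> t) \<le> 0" using all by (intro LIMSEQ_le_const) auto
    then show "char \<mu>1 t = char \<mu>2 t" unfolding \<delta>_def by simp
  qed
  then show ?thesis by (rule Levy_uniqueness[OF r1 r2])
qed


lemma sum_list_01:
  assumes "set L \<subseteq> {0, 1}"
  shows "sum_list L = card (digit_set L)"
proof -
  have "sum_list L = (\<Sum>i = 0..<length L. L ! i)" by (rule sum_list_sum_nth)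
  also have "\<dots> = (\<Sum>i = 0..<length L. if L ! i = 1 then 1 else 0)"
  proof (rule sum.cong)
    fix i assume "i \<in> {0..<length L}"
    then have "L ! i \<in> {0, 1}" using assms nth_mem by fastforce
    then show "L ! i = (if L ! i = 1 then 1 else 0)" by auto
  qed simp
  also have "\<dots> = card ({0..<length L} \<inter> {i. L ! i = 1})"
    by (simp add: sum.If_cases)
  also have "{0..<length L} \<inter> {i. L ! i = 1} = digit_set L" unfolding digit_set_def by auto
  finally show ?thesis by simp
qed

lemma ifs_eq:
  assumes dv: "digit_vector N B" and N: "N \<ge> 2"
  shows "ifs_measure N B = mu0 N (digit_set B)"
    and "digit_set B \<subseteq> {..<N}" "finite (digit_set B)" "digit_set B \<noteq> {}"
    and "sum_list B = card (digit_set B)"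
proof -
  have len: "length B = N" and s01: "set B \<subseteq> {0, 1}" and s2: "2 \<le> sum_list B"
    using dv unfolding digit_vector_def by auto
  show sub: "digit_set B \<subseteq> {..<N}" using len unfolding digit_set_def by auto
  show fin: "finite (digit_set B)" using sub finite_subset by blast
  show sc: "sum_list B = card (digit_set B)" by (rule sum_list_01[OF s01])
  show ne: "digit_set B \<noteq> {}" using s2 sc by auto
  have "ifs_measure N B = (THE \<mu>. goodm N (digit_set B) \<mu>)"
    unfolding ifs_measure_def goodm_def sc ..
  also have "\<dots> = mu0 N (digit_set B)"
  proof (rule the_equality)
    show "goodm N (digit_set B) (mu0 N (digit_set B))" by (rule mu0_good(1)[OF N fin ne sub])
    show "\<mu> = mu0 N (digit_set B)" if "goodm N (digit_set B) \<mu>" for \<mu>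
      by (rule good_unique[OF that mu0_good(1)[OF N fin ne sub] fin ne N])
  qed
  finally show "ifs_measure N B = mu0 N (digit_set B)" .
qed

lemma E1:
  assumes g: "goodm N D \<mu>" and one: "measure \<mu> {0..1} = 1" and u: "u < 0"
  shows "measure \<mu> {l..u} = 0"
proof -
  interpret mu: prob_space \<mu> using g unfolding goodm_def by auto
  have sets: "sets \<mu> = sets borel" using g unfolding goodm_def by auto
  have "measure \<mu> ({l..u} \<union> {0..1}) = measure \<mu> {l..u} + measure \<mu> {0..1}"
    using u sets by (intro mu.finite_measure_Union) auto
  moreover have "measure \<mu> ({l..u} \<union> {0..1}) \<le> 1" by (rule mu.prob_le_1)
  ultimately show ?thesis using one measure_nonneg[of \<mu> "{l..u}"] by linarith
qed

lemma E2:
  assumes g: "goodm N D \<mu>" and one: "measure \<mu> {0..1} = 1" and "l \<le> 0" "1 \<le> u"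
  shows "measure \<mu> {l..u} = 1"
proof -
  interpret mu: prob_space \<mu> using g unfolding goodm_def by auto
  have sets: "sets \<mu> = sets borel" using g unfolding goodm_def by auto
  have "measure \<mu> {0..1} \<le> measure \<mu> {l..u}"
    using assms sets by (intro mu.finite_measure_mono) auto
  then show ?thesis using one mu.prob_le_1[of "{l..u}"] by linarith
qed

lemma E3:
  assumes g: "goodm N D \<mu>" and N: "N > 0"
  shows "measure \<mu> {l..u} = 1 / real (card D) * (\<Sum>d\<in>D. measure \<mu> {real N * l - real d .. real N * u - real d})"
proof -
  have "measure \<mu> {l..u} = 1 / real (card D) * (\<Sum>d\<in>D. measure \<mu> (phi N d -` {l..u}))"
    using g unfolding goodm_def by auto
  also have "(\<lambda>d. phi N d -` {l..u}) = (\<lambda>d. {real N * l - real d .. real N * u - real d})"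
    using N by (auto simp: phi_def fun_eq_iff field_simps)
  finally show ?thesis .
qed

lemma eval_pt:
  assumes g: "goodm N D \<mu>" and one: "measure \<mu> {0..1} = 1" and ne: "int d \<noteq> \<lfloor>z\<rfloor>"
  shows "measure \<mu> {- real d .. z - real d} = (if real d + 1 \<le> z then 1 else 0)"
proof (cases "real d + 1 \<le> z")
  case True
  then show ?thesis using E2[OF g one] by simp
next
  case False
  have "\<lfloor>z\<rfloor> < int d + 1" using False by linarith
  then have "\<lfloor>z\<rfloor> < int d" using ne by simp
  then have "z < real d" by linarith
  then show ?thesis using E1[OF g one] False by simp
qed


lemma two_list:
  fixes p q N :: nat
  assumes N: "N \<ge> 3" and pq: "p < N" "q < N" "p \<noteq> q"
  defines "L \<equiv> map (\<lambda>i. if i \<in> {p, q} then 1 else (0::nat)) [0..<N]"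
  shows "digit_vector N L" "goodm N {p, q} (ifs_measure N L)" "measure (ifs_measure N L) {0..1} = 1"
    and "\<And>y. cdf_B N L y = 1 / 2 * (measure (ifs_measure N L) {- real p .. real N * y - real p}
                                   + measure (ifs_measure N L) {- real q .. real N * y - real q})"
proof -
  have len: "length L = N" unfolding L_def by simp
  have s01: "set L \<subseteq> {0, 1}" unfolding L_def by auto
  have ds: "digit_set L = {p, q}" unfolding digit_set_def L_def using pq by (auto split: if_splits)
  have sl: "sum_list L = 2" using sum_list_01[OF s01] ds pq by simp
  show dv: "digit_vector N L" unfolding digit_vector_def using len s01 sl N by simp
  have N2: "N \<ge> 2" using N by simp
  have eq: "ifs_measure N L = mu0 N {p, q}" using ifs_eq(1)[OF dv N2] ds by simp
  show g: "goodm N {p, q} (ifs_measure N L)" unfolding eq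
    by (rule mu0_good(1)[OF N2]) (use pq in auto)
  show "measure (ifs_measure N L) {0..1} = 1" unfolding eq
    by (rule mu0_good(2)[OF N2]) (use pq in auto)
  fix y
  have "cdf_B N L y = measure (ifs_measure N L) {0..y}" unfolding cdf_B_def ..
  also have "\<dots> = 1 / real (card {p, q}) * (\<Sum>d\<in>{p, q}. measure (ifs_measure N L) {real N * 0 - real d .. real N * y - real d})"
    by (rule E3[OF g]) (use N in simp)
  finally show "cdf_B N L y = 1 / 2 * (measure (ifs_measure N L) {- real p .. real N * y - real p}
                                   + measure (ifs_measure N L) {- real q .. real N * y - real q})"
    using pq by simp
qed

theorem lemma2p5:
  fixes N k :: nat and x :: "nat \<Rightarrow> real"
  assumes "N \<ge> 4"
    and "\<forall>n\<in>{1..k}. x n \<in> {0..1}"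
    and "\<forall>n m. 1 \<le> n \<and> n \<le> m \<and> m \<le> k \<longrightarrow> x n \<le> x m"
    and "k < N div 2"
  shows "\<exists>B C. digit_vector N B \<and> digit_vector N C \<and>
           (\<exists>t\<in>{0..1}. cdf_B N B t \<noteq> cdf_B N C t) \<and>
           (\<forall>n\<in>{1..k}. cdf_B N B (x n) = cdf_B N C (x n))"
proof -
  have N3: "N \<ge> 3" and N0: "N > 0" using assms(1) by auto
  define c where "c n = nat \<lfloor>real N * x n\<rfloor>" for n
  define I where "I = (\<lambda>n. c n div 2) ` {1..k}"
  have cI: "card I \<le> k" using card_image_le[of "{1..k}" "\<lambda>n. c n div 2"] by (simp add: I_def)
  obtain j where j: "j < N div 2" "j \<notin> I"
  proof -
    have "\<not> {..<N div 2} \<subseteq> I"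
    proof
      assume "{..<N div 2} \<subseteq> I"
      then have "card {..<N div 2} \<le> card I" by (intro card_mono) (auto simp: I_def)
      then show False using cI assms(4) by simp
    qed
    then show ?thesis using that by auto
  qed
  define a where "a = 2 * j"
  have "2 * (N div 2) \<le> N" by simp
  then have a1: "a + 1 < N" using j(1) unfolding a_def by linarith
  have ca: "c n \<noteq> a \<and> c n \<noteq> a + 1" if "n \<in> {1..k}" for n
  proof -
    have "c n div 2 \<noteq> j" using j(2) that unfolding I_def by auto
    then show ?thesis unfolding a_def by auto
  qed
  obtain b where b: "b < N" "b \<notin> c ` {1..k}" "b \<noteq> a" "b \<noteq> a + 1"
  proof -
    have "card (c ` {1..k} \<union> {a, a + 1}) \<le> card (c ` {1..k}) + card {a, a + 1}" by (rule card_Un_le)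
    also have "\<dots> \<le> k + 2" using card_image_le[of "{1..k}" c] card_insert_le[of "{a+1}" a] by simp
    also have "\<dots> < N" using assms(4) assms(1) by linarith
    finally have lt: "card (c ` {1..k} \<union> {a, a + 1}) < card {..<N}" by simp
    have "\<not> {..<N} \<subseteq> c ` {1..k} \<union> {a, a + 1}"
    proof
      assume "{..<N} \<subseteq> c ` {1..k} \<union> {a, a + 1}"
      then have "card {..<N} \<le> card (c ` {1..k} \<union> {a, a + 1})" by (intro card_mono) auto
      then show False using lt by simp
    qed
    then show ?thesis using that by auto
  qed
  define LB where "LB = map (\<lambda>i. if i \<in> {a, b} then 1 else (0::nat)) [0..<N]"
  define LC where "LC = map (\<lambda>i. if i \<in> {a + 1, b} then 1 else (0::nat)) [0..<N]"
  have aN: "a < N" using a1 by simp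
  note TB = two_list[OF N3 aN b(1) b(3)[symmetric], folded LB_def]
  note TC = two_list[OF N3 a1 b(1) b(4)[symmetric], folded LC_def]
  let ?\<mu>B = "ifs_measure N LB" and ?\<mu>C = "ifs_measure N LC"
  have gB: "goodm N {a, b} ?\<mu>B" and oB: "measure ?\<mu>B {0..1} = 1" and dB: "digit_vector N LB"
    using TB by auto
  have gC: "goodm N {a + 1, b} ?\<mu>C" and oC: "measure ?\<mu>C {0..1} = 1" and dC: "digit_vector N LC"
    using TC by auto
  have FB: "cdf_B N LB y = 1 / 2 * (measure ?\<mu>B {- real a .. real N * y - real a}
                                   + measure ?\<mu>B {- real b .. real N * y - real b})" for y
    using TB(4) .
  have FC: "cdf_B N LC y = 1 / 2 * (measure ?\<mu>C {- real (a + 1) .. real N * y - real (a + 1)}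
                                   + measure ?\<mu>C {- real b .. real N * y - real b})" for y
    using TC(4) .
  have pts: "cdf_B N LB (x n) = cdf_B N LC (x n)" if n: "n \<in> {1..k}" for n
  proof -
    define z where "z = real N * x n"
    have z0: "0 \<le> z" using assms(2) n unfolding z_def by auto
    have fz: "\<lfloor>z\<rfloor> = int (c n)" unfolding c_def z_def using z0 z_def by simp
    have nb: "c n \<noteq> b" using b(2) n by auto
    have v: "\<And>\<mu> D d. goodm N D \<mu> \<Longrightarrow> measure \<mu> {0..1} = 1 \<Longrightarrow> d \<noteq> c n \<Longrightarrow>
      measure \<mu> {- real d .. z - real d} = (if real d + 1 \<le> z then 1 else 0)"
      by (rule eval_pt) (auto simp: fz)
    have same: "(real a + 1 \<le> z) = (real (a + 1) + 1 \<le> z)"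
    proof
      assume h: "real a + 1 \<le> z"
      then have "int (a + 1) \<le> \<lfloor>z\<rfloor>" by (simp add: le_floor_iff)
      then have "int (a + 2) \<le> \<lfloor>z\<rfloor>" using ca[OF n] fz by auto
      then show "real (a + 1) + 1 \<le> z" by (simp add: le_floor_iff)
    qed simp
    show ?thesis
      unfolding FB FC z_def[symmetric]
      using v[OF gB oB, of a] v[OF gB oB, of b] v[OF gC oC, of "a + 1"] v[OF gC oC, of b] ca[OF n] nb same
      by simp
  qed
  define t where "t = real (a + 1) / real N"
  have t01: "t \<in> {0..1}" unfolding t_def using a1 by auto
  have Nt: "real N * t = real (a + 1)" unfolding t_def using N0 by simp
  have distinct: "cdf_B N LB t \<noteq> cdf_B N LC t"
  proof -
    define vb where "vb = (if real b + 1 \<le> real (a + 1) then 1 else (0::real))"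
    have "cdf_B N LB t = 1 / 2 * (1 + vb)"
      unfolding FB Nt vb_def
      using eval_pt[OF gB oB, of a "real (a + 1)"] eval_pt[OF gB oB, of b "real (a + 1)"] b(4)
      by simp
    moreover have "cdf_B N LC t \<le> 1 / 2 * (1 / 2 + vb)"
    proof -
      have m1: "measure ?\<mu>C {- real (a + 1) .. 0} \<le> 1 / 2"
      proof -
        have "measure ?\<mu>C {- real (a + 1) .. 0} = 1 / real (card {a + 1, b}) *
           (\<Sum>d\<in>{a + 1, b}. measure ?\<mu>C {real N * (- real (a + 1)) - real d .. real N * 0 - real d})"
          by (rule E3[OF gC N0])
        also have "\<dots> = 1 / 2 * (measure ?\<mu>C {real N * (- real (a + 1)) - real (a + 1) .. - real (a + 1)}
             + measure ?\<mu>C {real N * (- real (a + 1)) - real b .. - real b})"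
          using b(4) by simp
        also have "measure ?\<mu>C {real N * (- real (a + 1)) - real (a + 1) .. - real (a + 1)} = 0"
          by (rule E1[OF gC oC]) simp
        also have "measure ?\<mu>C {real N * (- real (a + 1)) - real b .. - real b} \<le> 1"
          using gC unfolding goodm_def by (metis prob_space.prob_le_1)
        finally show ?thesis by simp
      qed
      have "cdf_B N LC t = 1 / 2 * (measure ?\<mu>C {- real (a + 1) .. 0} + vb)"
        unfolding FC Nt vb_def
        using eval_pt[OF gC oC, of b "real (a + 1)"] b(4)
        by simp
      then show ?thesis using m1 by simp
    qed
    ultimately show ?thesis by auto
  qed
  show ?thesis using dB dC t01 distinct pts by blast
qed

end
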